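(* Let $q\in\mathcal X$ be a weak solution of the PDE with null initial datum, and let $H\in C^2_b(\mathbb R,\mathbb R)$ have compactly supported derivative. Define $q_H(x;t):=\int_{m\ge x^1}H(m)q(m,x;t)\,dm$ for $x\in\mathbb R^d$, $t\in]0,T]$. Then $q_H(\cdot;t)\in L^2(\mathbb R^d)$ for all $t\in]0,T]$, and $q_H$ solves $\partial_tq_H=\mathcal L^*q_H+\frac12H'(x^1)q(x^1,x^1,\tilde x;t)$ in the weak sense: for all $F\in C^2_c(\mathbb R^d,\mathbb R)$ and all $t\in]0,T]$, $$\int_{\mathbb R^d}F(x)q_H(x;t)\,dx=\int_0^t\!\!\int_{\mathbb R^d}\mathcal LF(x)\,q_H(x;s)\,dx\,ds+\frac12\int_0^t\!\!\int_{\mathbb R^d}H'(m)F(m,\tilde x)\,q(m,m,\tilde x;s)\,dm\,d\tilde x\,ds,$$ where $\mathcal LF=B\cdot\nabla F+\frac12\Delta F$ and $\mathcal L^*\Phi=-B\cdot\nabla\Phi-\Phi\,\mathrm{div}B+\frac12\Delta\Phi$.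
   Context: Standing setting: $d\ge1$, $T>0$, $B\in C^1_b(\mathbb R^d,\mathbb R^d)$. Write $x=(x^1,\tilde x)\in\mathbb R\times\mathbb R^{d-1}$; $\mathcal T:=\{(m,x)\in\mathbb R\times\mathbb R^d:m\ge x^1\}$. For $\Phi\in C^2(\mathbb R^{d+1})$, $\mathcal L\Phi(m,x)=\sum_iB^i(x)\partial_{x^i}\Phi+\frac12\sum_i\partial^2_{x^ix^i}\Phi$ (acting on $x$ only). $\mathcal X$: real functions $p$ on $]0,T]\times\mathcal T$ with (a) $\sup_{t\in]0,T]}\int_{\mathbb R^d}[\int_{m\ge x^1}|p(m,x;t)|dm]^2dx<\infty$; (c) for all $t$, $(m,\tilde x)\mapsto\sup_{u>0}p(m,m-u,\tilde x;t)\in L^1(\mathbb R^d)$, and for a.e. $(m,\tilde x)$, $x^1\mapsto p(m,x^1,\tilde x;t)$ is continuous on $]-\infty,m[$ and $p(m,m,\tilde x;t):=\lim_{u\to0^+}p(m,m-u,\tilde x;t)$ exists; (b) $(m,\tilde x;s)\mapsto p(m,m,\tilde x;s)\in L^1(]0,T];L^2(\mathbb R^d))$. Weak solution with null initial datum: $q\in\mathcal X$ such that for all $\Phi\in C^2_c(\mathbb R^{d+1})$, $t\in]0,T]$: $\int_{\mathcal T}\Phi q(\cdot;t)=\int_0^t\int_{\mathcal T}q(m,x;s)\mathcal L\Phi(m,x)\,dm\,dx\,ds+\frac12\int_0^t\int_{\mathbb R^d}\partial_m\Phi(m,m,\tilde x)q(m,m,\tilde x;s)\,dm\,d\tilde x\,ds$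 ($\partial_m\Phi$ = derivative in the first variable, evaluated at $(m,m,\tilde x)$). *)

theory Defs
  imports "HOL-Analysis.Analysis"
begin

text \<open>Points of R^d are vectors real^'n (d = CARD('n) \<ge> 1); the distinguished
  first coordinate x^1 is the coordinate i0 :: 'n, the remaining coordinates form x-tilde.\<close>

definition pd :: "('a::real_normed_vector \<Rightarrow> real) \<Rightarrow> 'a \<Rightarrow> 'a \<Rightarrow> real" where
  "pd f v x = deriv (\<lambda>h. f (x + h *\<^sub>R v)) 0"

definition C1_fun :: "('a::euclidean_space \<Rightarrow> real) \<Rightarrow> bool" where
  "C1_fun f \<longleftrightarrow> continuous_on UNIV f \<and>
     (\<forall>v\<in>Basis. (\<forall>x. (\<lambda>h. f (x + h *\<^sub>R v)) differentiable (at 0)) \<and> continuous_on UNIV (pd f v))"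

definition C2_fun :: "('a::euclidean_space \<Rightarrow> real) \<Rightarrow> bool" where
  "C2_fun f \<longleftrightarrow> C1_fun f \<and> (\<forall>v\<in>Basis. C1_fun (pd f v))"

definition C2c :: "('a::euclidean_space \<Rightarrow> real) \<Rightarrow> bool" where
  "C2c f \<longleftrightarrow> C2_fun f \<and> compact (closure {x. f x \<noteq> 0})"

definition C1b_field :: "(real^'n \<Rightarrow> real^'n) \<Rightarrow> bool" where
  "C1b_field B \<longleftrightarrow> (\<forall>i. C1_fun (\<lambda>x. B x $ i)) \<and> bounded (range B) \<and>
     (\<forall>i j. bounded (range (pd (\<lambda>x. B x $ i) (axis j 1))))"

definition C2b_real :: "(real \<Rightarrow> real) \<Rightarrow> bool" where
  "C2b_real H \<longleftrightarrow> C2_fun H \<and> bounded (range H) \<and> bounded (range (deriv H)) \<and>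
     bounded (range (deriv (deriv H)))"

definition setc :: "'n \<Rightarrow> real^'n \<Rightarrow> real \<Rightarrow> real^'n" where
  "setc i0 y a = (\<chi> j. if j = i0 then a else y $ j)"

definition Tset :: "'n \<Rightarrow> (real \<times> (real^'n)) set" where
  "Tset i0 = {(m, x). x $ i0 \<le> m}"

text \<open>Boundary trace p(m,m,x-tilde;t) := lim_{u\<rightarrow>0+} p(m,m-u,x-tilde;t), where the point
  y = (m, x-tilde) of R^d has y$i0 = m.\<close>
definition trace :: "'n \<Rightarrow> (real \<Rightarrow> real^'n \<Rightarrow> real \<Rightarrow> real) \<Rightarrow> real^'n \<Rightarrow> real \<Rightarrow> real" where
  "trace i0 p y s = Lim (at_left (y $ i0)) (\<lambda>a. p (y $ i0) (setc i0 y a) s)"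

definition LPhi :: "'n \<Rightarrow> (real^'n \<Rightarrow> real^'n) \<Rightarrow> (real \<times> (real^('n::finite)) \<Rightarrow> real) \<Rightarrow> real \<times> (real^'n) \<Rightarrow> real" where
  "LPhi i0 B \<Phi> z = (\<Sum>i\<in>UNIV. B (snd z) $ i * pd \<Phi> (0, axis i 1) z)
      + 1/2 * (\<Sum>i\<in>UNIV. pd (pd \<Phi> (0, axis i 1)) (0, axis i 1) z)"

definition genL :: "(real^'n \<Rightarrow> real^'n) \<Rightarrow> (real^('n::finite) \<Rightarrow> real) \<Rightarrow> real^'n \<Rightarrow> real" where
  "genL B F x = (\<Sum>i\<in>UNIV. B x $ i * pd F (axis i 1) x)
      + 1/2 * (\<Sum>i\<in>UNIV. pd (pd F (axis i 1)) (axis i 1) x)"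

text \<open>The class X (with the implicit measurability needed for the integrals to make sense).\<close>
definition inX :: "'n \<Rightarrow> real \<Rightarrow> (real \<Rightarrow> real^('n::finite) \<Rightarrow> real \<Rightarrow> real) \<Rightarrow> bool" where
  "inX i0 T p \<longleftrightarrow>
     \<comment> \<open>measurability\<close>
     (\<forall>t\<in>{0<..T}. (\<lambda>z. indicator (Tset i0) z * p (fst z) (snd z) t) \<in> borel_measurable lborel) \<and>
     (\<lambda>(z, t). indicator (Tset i0) z * indicator {0<..T} t * p (fst z) (snd z) t)
        \<in> borel_measurable (lborel :: ((real \<times> (real^'n)) \<times> real) measure) \<and>
     \<comment> \<open>(a)\<close>
     (SUP t\<in>{0<..T}. \<integral>\<^sup>+ x. (\<integral>\<^sup>+ m. indicator {x $ i0..} m * ennreal \<bar>p m x t\<bar> \<partial>lborel)\<^sup>2 \<partial>lborel) < \<infinity> \<and>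
     \<comment> \<open>(c)\<close>
     (\<forall>t\<in>{0<..T}.
        (AE y in lborel. \<bar>SUP u\<in>{0<..}. ereal (p (y $ i0) (setc i0 y (y $ i0 - u)) t)\<bar> \<noteq> \<infinity>) \<and>
        integrable lborel (\<lambda>y. real_of_ereal (SUP u\<in>{0<..}. ereal (p (y $ i0) (setc i0 y (y $ i0 - u)) t))) \<and>
        (AE y in lborel. continuous_on {..<y $ i0} (\<lambda>a. p (y $ i0) (setc i0 y a) t) \<and>
            (\<exists>L. ((\<lambda>a. p (y $ i0) (setc i0 y a) t) \<longlongrightarrow> L) (at_left (y $ i0))))) \<and>
     \<comment> \<open>(b): trace in L^1(]0,T]; L^2(R^d))\<close>
     (\<lambda>(y, s). indicator {0<..T} s * trace i0 p y s) \<in> borel_measurable (lborel :: ((real^'n) \<times> real) measure) \<and>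
     (AE s in lborel. s \<in> {0<..T} \<longrightarrow> integrable lborel (\<lambda>y. (trace i0 p y s)\<^sup>2)) \<and>
     (\<integral>\<^sup>+ s. indicator {0<..T} s * ennreal (sqrt (\<integral> y. (trace i0 p y s)\<^sup>2 \<partial>lborel)) \<partial>lborel) < \<infinity>"

definition weak_sol :: "'n \<Rightarrow> real \<Rightarrow> (real^'n \<Rightarrow> real^'n) \<Rightarrow> (real \<Rightarrow> real^('n::finite) \<Rightarrow> real \<Rightarrow> real) \<Rightarrow> bool" where
  "weak_sol i0 T B q \<longleftrightarrow> inX i0 T q \<and>
     (\<forall>\<Phi>. C2c \<Phi> \<longrightarrow> (\<forall>t\<in>{0<..T}.
        (\<integral> z. indicator (Tset i0) z * \<Phi> z * q (fst z) (snd z) t \<partial>lborel) =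
        (\<integral> s. indicator {0<..t} s *
            (\<integral> z. indicator (Tset i0) z * q (fst z) (snd z) s * LPhi i0 B \<Phi> z \<partial>lborel) \<partial>lborel)
        + 1/2 * (\<integral> s. indicator {0<..t} s *
            (\<integral> y. pd \<Phi> (1, 0) (y $ i0, y) * trace i0 q y s \<partial>lborel) \<partial>lborel)))"

definition qH :: "'n \<Rightarrow> (real \<Rightarrow> real) \<Rightarrow> (real \<Rightarrow> real^('n::finite) \<Rightarrow> real \<Rightarrow> real) \<Rightarrow> real^'n \<Rightarrow> real \<Rightarrow> real" where
  "qH i0 H q x t = (\<integral> m. indicator {x $ i0..} m * H m * q m x t \<partial>lborel)"

end

theory Submission
  imports Defs
begin
lemma deriv_split_at:
  fixes f :: "real \<Rightarrow> real"
  assumes l: "(f has_real_derivative D) (at a within {..a})"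
      and r: "(f has_real_derivative D) (at a within {a..})"
  shows "(f has_real_derivative D) (at a)"
proof -
  have e: "({..a} \<union> {a..}) = (UNIV::real set)" by auto
  have "((\<lambda>y. (f y - f a) / (y - a)) \<longlongrightarrow> D) (at a within ({..a} \<union> {a..}))"
    using l r unfolding has_field_derivative_iff Lim_within_Un by simp
  then show ?thesis unfolding has_field_derivative_iff e by simp
qed

lemma pw_deriv:
  fixes f g f' g' :: "real \<Rightarrow> real"
  assumes f: "\<And>x. (f has_real_derivative f' x) (at x)"
    and g: "\<And>x. (g has_real_derivative g' x) (at x)"
    and e0: "f a = g a" and e1: "f' a = g' a"
  shows "((\<lambda>x. if x \<le> a then f x else g x) has_real_derivative (if x \<le> a then f' x else g' x)) (at x)"
proof (cases "x < a")
  case True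
  have "((\<lambda>x. if x \<le> a then f x else g x) has_real_derivative f' x) (at x)"
    by (rule has_field_derivative_transform_within_open[OF f[of x], where S="{..<a}"])
       (use True in auto)
  then show ?thesis using True by simp
next
  case False
  show ?thesis
  proof (cases "x > a")
    case True
    have "((\<lambda>x. if x \<le> a then f x else g x) has_real_derivative g' x) (at x)"
      by (rule has_field_derivative_transform_within_open[OF g[of x], where S="{a<..}"])
         (use True in auto)
    then show ?thesis using True by simp
  next
    case False
    with \<open>\<not> x < a\<close> have xa: "x = a" by auto
    have L: "((\<lambda>x. if x \<le> a then f x else g x) has_real_derivative f' a) (at a within {..a})"
      by (rule has_field_derivative_transform_within[OF has_field_derivative_at_within[OF f[of a]], where d=1])
         auto
    have R: "((\<lambda>x. if x \<le> a then f x else g x) has_real_derivative g' a) (at a within {a..})"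
      by (rule has_field_derivative_transform_within[OF has_field_derivative_at_within[OF g[of a]], where d=1])
         (use e0 e1 in auto)
    show ?thesis using deriv_split_at[OF L R[folded e1]] xa by simp
  qed
qed

definition pp :: "real \<Rightarrow> real" where "pp u = 1 - 10*u^3 + 15*u^4 - 6*u^5"
definition pp1 :: "real \<Rightarrow> real" where "pp1 u = - 30*u^2 + 60*u^3 - 30*u^4"
definition pp2 :: "real \<Rightarrow> real" where "pp2 u = - 60*u + 180*u^2 - 120*u^3"
definition pp3 :: "real \<Rightarrow> real" where "pp3 u = - 60 + 360*u - 360*u^2"

lemma pp_d: "(pp has_real_derivative pp1 x) (at x)"
  unfolding pp_def pp1_def by (rule derivative_eq_intros refl | simp)+ 
lemma pp1_d: "(pp1 has_real_derivative pp2 x) (at x)"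
  unfolding pp1_def pp2_def by (rule derivative_eq_intros refl | simp)+ 

definition chi :: "real \<Rightarrow> real" where
  "chi u = (if u \<le> 0 then 1 else (if u \<le> 1 then pp u else 0))"
definition chi1 :: "real \<Rightarrow> real" where
  "chi1 u = (if u \<le> 0 then 0 else (if u \<le> 1 then pp1 u else 0))"
definition chi2 :: "real \<Rightarrow> real" where
  "chi2 u = (if u \<le> 0 then 0 else (if u \<le> 1 then pp2 u else 0))"

lemma chi_d: "(chi has_real_derivative chi1 x) (at x)"
proof -
  have i: "((\<lambda>u. if u \<le> 1 then pp u else 0) has_real_derivative (if x \<le> 1 then pp1 x else 0)) (at x)" for x
    by (rule pw_deriv[OF pp_d]) (auto simp: pp_def pp1_def)
  show ?thesis unfolding chi_def[abs_def] chi1_def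
    by (rule pw_deriv[OF _ i]) (auto simp: pp_def pp1_def)
qed

lemma chi1_d: "(chi1 has_real_derivative chi2 x) (at x)"
proof -
  have i: "((\<lambda>u. if u \<le> 1 then pp1 u else 0) has_real_derivative (if x \<le> 1 then pp2 x else 0)) (at x)" for x
    by (rule pw_deriv[OF pp1_d]) (auto simp: pp1_def pp2_def)
  show ?thesis unfolding chi1_def[abs_def] chi2_def
    by (rule pw_deriv[OF _ i]) (auto simp: pp1_def pp2_def)
qed

lemma chi2_cont: "continuous_on UNIV chi2"
proof -
  have i: "continuous_on UNIV (\<lambda>u. if u \<le> 1 then pp2 u else 0)"
    by (rule continuous_on_cases_le) (auto simp: pp2_def intro!: continuous_intros)
  show ?thesis unfolding chi2_def[abs_def]
    by (rule continuous_on_cases_le) (auto simp: pp2_def intro!: continuous_intros continuous_on_subset[OF i])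
qed

lemma chi_bounds: "0 \<le> chi u" "chi u \<le> 1"
proof -
  have a: "pp u = (1-u)^3 * (1 + 3*u + 6*u^2)" unfolding pp_def by (simp add: algebra_simps power2_eq_square power3_eq_cube power4_eq_xxxx power_def)
  have b: "1 - pp u = u^3 * (6*(u - 5/4)^2 + 5/8)" unfolding pp_def by (simp add: algebra_simps power2_eq_square power3_eq_cube power4_eq_xxxx power_def)
  show "0 \<le> chi u" unfolding chi_def a by (auto intro!: mult_nonneg_nonneg add_nonneg_nonneg)
  have "0 < u \<Longrightarrow> 0 \<le> 1 - pp u" unfolding b by (auto intro!: mult_nonneg_nonneg add_nonneg_nonneg)
  then show "chi u \<le> 1" unfolding chi_def by auto
qed

lemma chi_one: "u \<le> 0 \<Longrightarrow> chi u = 1" and chi1_zero: "u \<le> 0 \<Longrightarrow> chi1 u = 0"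
  and chi_zero: "u \<ge> 1 \<Longrightarrow> chi u = 0"
  by (auto simp: chi_def chi1_def pp_def)

definition C2w :: "(real \<Rightarrow> real) \<Rightarrow> (real \<Rightarrow> real) \<Rightarrow> (real \<Rightarrow> real) \<Rightarrow> bool" where
 "C2w g g1 g2 \<longleftrightarrow> (\<forall>x. (g has_real_derivative g1 x) (at x)) \<and> (\<forall>x. (g1 has_real_derivative g2 x) (at x))
     \<and> continuous_on UNIV g2"

lemma C2w_mult:
  assumes "C2w g g1 g2" "C2w h h1 h2"
  shows "C2w (\<lambda>x. g x * h x) (\<lambda>x. g1 x * h x + g x * h1 x) (\<lambda>x. g2 x * h x + 2 * (g1 x * h1 x) + g x * h2 x)"
proof -
  have gc: "continuous_on UNIV g" "continuous_on UNIV g1" "continuous_on UNIV h" "continuous_on UNIV h1"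
    using assms unfolding C2w_def
    by (meson DERIV_isCont continuous_at_imp_continuous_on)+
  show ?thesis using assms gc unfolding C2w_def
    by (auto intro!: derivative_eq_intros continuous_intros simp: algebra_simps)
qed

lemma C2w_affine:
  assumes "C2w g g1 g2"
  shows "C2w (\<lambda>x. g (a*x+b)) (\<lambda>x. a * g1 (a*x+b)) (\<lambda>x. a * a * g2 (a*x+b))"
proof -
  have "continuous_on UNIV (\<lambda>x. g2 (a*x+b))"
    using assms unfolding C2w_def
    by (intro continuous_on_compose2[of UNIV g2 UNIV "\<lambda>x. a*x+b"]) (auto intro!: continuous_intros)
  moreover have "((\<lambda>x. g (a*x+b)) has_real_derivative a * g1 (a*x+b)) (at x)" for x
  proof -
    have l: "((\<lambda>x. a*x+b) has_real_derivative a) (at x)" by (auto intro!: derivative_eq_intros)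
    have g': "(g has_real_derivative g1 (a*x+b)) (at (a*x+b))" using assms unfolding C2w_def by blast
    have e: "g1 (a*x+b) * a = a * g1 (a*x+b)" by simp
    show ?thesis using DERIV_chain2[OF g' l] unfolding e .
  qed
  moreover have "((\<lambda>x. a * g1 (a*x+b)) has_real_derivative a * a * g2 (a*x+b)) (at x)" for x
  proof -
    have "((\<lambda>x. a*x+b) has_real_derivative a) (at x)" by (auto intro!: derivative_eq_intros)
    moreover have g': "(g1 has_real_derivative g2 (a*x+b)) (at (a*x+b))" using assms unfolding C2w_def by blast
    ultimately have "((\<lambda>x. g1 (a*x+b)) has_real_derivative g2 (a*x+b) * a) (at x)" using DERIV_chain2 by metis
    from DERIV_cmult[OF this, of a] show ?thesis by (simp add: algebra_simps)
  qed
  ultimately show ?thesis unfolding C2w_def by (auto intro!: continuous_on_mult_left)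
qed

lemma C1_fun_real_deriv:
  fixes f :: "real \<Rightarrow> real"
  assumes "C1_fun f"
  shows "(f has_real_derivative pd f 1 x) (at x)" "pd f 1 = deriv f"
proof -
  have d: "(\<lambda>h. f (x + h *\<^sub>R 1)) differentiable (at 0)" for x
    using assms unfolding C1_fun_def by (auto simp: Basis_real_def)
  have D: "(f has_real_derivative pd f 1 x) (at x)" for x
  proof -
    have "((\<lambda>h. f (h + x)) has_real_derivative pd f 1 x) (at 0)"
      using d[of x] unfolding pd_def
      by (metis (no_types, lifting) DERIV_deriv_iff_real_differentiable add.commute mult.right_neutral
          real_scaleR_def ext)
    then show ?thesis using DERIV_shift[of f _ 0 x] by simp
  qed
  show "(f has_real_derivative pd f 1 x) (at x)" by (rule D)
  show "pd f 1 = deriv f" using D DERIV_imp_deriv by (metis ext)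
qed

lemma C2_fun_C2w:
  fixes H :: "real \<Rightarrow> real"
  assumes "C2_fun H"
  shows "C2w H (deriv H) (pd (deriv H) 1)"
proof -
  have c1: "C1_fun H" and c1': "C1_fun (pd H 1)" using assms unfolding C2_fun_def by (auto simp: Basis_real_def)
  have e: "pd H 1 = deriv H" using C1_fun_real_deriv[OF c1] by simp
  show ?thesis unfolding C2w_def
    using C1_fun_real_deriv(1)[OF c1] C1_fun_real_deriv(1)[OF c1'] c1' unfolding e C1_fun_def
    by (auto simp: Basis_real_def)
qed

lemma pd_fst_prod:
  fixes f :: "'a::real_normed_vector \<Rightarrow> real"
  assumes "\<And>x. (g has_real_derivative g1 x) (at x)"
  shows "(\<lambda>h. (\<lambda>z. g (fst z) * f (snd z)) (z + h *\<^sub>R (1,0))) differentiable (at 0)"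
    and "pd (\<lambda>z. g (fst z) * f (snd z)) (1,0) z = g1 (fst z) * f (snd z)"
proof -
  have "((\<lambda>h. g (h + fst z)) has_real_derivative g1 (fst z)) (at 0)"
    using DERIV_shift[of g "g1 (fst z)" 0 "fst z"] assms by simp
  then have D: "((\<lambda>h. (\<lambda>z. g (fst z) * f (snd z)) (z + h *\<^sub>R (1,0))) has_real_derivative g1 (fst z) * f (snd z)) (at 0)"
    by (auto intro!: derivative_eq_intros simp: add.commute)
  then show "(\<lambda>h. (\<lambda>z. g (fst z) * f (snd z)) (z + h *\<^sub>R (1,0))) differentiable (at 0)"
    using real_differentiable_def by blast
  show "pd (\<lambda>z. g (fst z) * f (snd z)) (1,0) z = g1 (fst z) * f (snd z)"
    unfolding pd_def using DERIV_imp_deriv[OF D] .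
qed

lemma pd_snd_prod:
  fixes f :: "'a::real_normed_vector \<Rightarrow> real"
  assumes "(\<lambda>h. f (snd z + h *\<^sub>R v)) differentiable (at 0)"
  shows "(\<lambda>h. (\<lambda>z. g (fst z) * f (snd z)) (z + h *\<^sub>R (0,v))) differentiable (at 0)"
    and "pd (\<lambda>z. g (fst z) * f (snd z)) (0,v) z = g (fst z) * pd f v (snd z)"
proof -
  have "((\<lambda>h. f (snd z + h *\<^sub>R v)) has_real_derivative pd f v (snd z)) (at 0)"
    using assms unfolding pd_def by (simp add: DERIV_deriv_iff_real_differentiable)
  then have D: "((\<lambda>h. (\<lambda>z. g (fst z) * f (snd z)) (z + h *\<^sub>R (0,v))) has_real_derivative g (fst z) * pd f v (snd z)) (at 0)"
    by (auto intro!: derivative_eq_intros)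
  then show "(\<lambda>h. (\<lambda>z. g (fst z) * f (snd z)) (z + h *\<^sub>R (0,v))) differentiable (at 0)"
    using real_differentiable_def by blast
  show "pd (\<lambda>z. g (fst z) * f (snd z)) (0,v) z = g (fst z) * pd f v (snd z)"
    using DERIV_imp_deriv[OF D] by (simp add: pd_def[of "\<lambda>z. g (fst z) * f (snd z)"])
qed

lemma cont_prod:
  fixes f :: "'a::topological_space \<Rightarrow> real"
  assumes "continuous_on UNIV g" "continuous_on UNIV f"
  shows "continuous_on UNIV (\<lambda>z. g (fst z) * f (snd z))"
proof -
  have "continuous_on UNIV (\<lambda>z. g (fst z))"
    by (rule continuous_on_compose2[OF assms(1)]) (auto intro: continuous_intros)
  moreover have "continuous_on UNIV (\<lambda>z. f (snd z))"
    by (rule continuous_on_compose2[OF assms(2)]) (auto intro: continuous_intros)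
  ultimately show ?thesis by (intro continuous_intros)
qed

lemma Basis_prod_cases:
  assumes "(v::real \<times> 'a::euclidean_space) \<in> Basis"
  obtains "v = (1,0)" | w where "w \<in> Basis" "v = (0,w)"
  using assms unfolding Basis_prod_def Basis_real_def by auto

lemma C1_prod:
  fixes f :: "'a::euclidean_space \<Rightarrow> real"
  assumes g: "\<And>x. (g has_real_derivative g1 x) (at x)" and g1: "continuous_on UNIV g1"
    and f: "C1_fun f"
  shows "C1_fun (\<lambda>z. g (fst z) * f (snd z))"
    and "pd (\<lambda>z. g (fst z) * f (snd z)) (1,0) = (\<lambda>z. g1 (fst z) * f (snd z))"
    and "\<And>w. w \<in> Basis \<Longrightarrow> pd (\<lambda>z. g (fst z) * f (snd z)) (0,w) = (\<lambda>z. g (fst z) * pd f w (snd z))"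
proof -
  have gc: "continuous_on UNIV g" using g by (meson DERIV_isCont continuous_at_imp_continuous_on)
  have fd: "\<And>w x. w \<in> Basis \<Longrightarrow> (\<lambda>h. f (x + h *\<^sub>R w)) differentiable (at 0)"
    and fc: "continuous_on UNIV f" and pc: "\<And>w. w \<in> Basis \<Longrightarrow> continuous_on UNIV (pd f w)"
    using f unfolding C1_fun_def by auto
  show P1: "pd (\<lambda>z. g (fst z) * f (snd z)) (1,0) = (\<lambda>z. g1 (fst z) * f (snd z))"
    using pd_fst_prod(2)[OF g] by (intro ext) auto
  show P2: "\<And>w. w \<in> Basis \<Longrightarrow> pd (\<lambda>z. g (fst z) * f (snd z)) (0,w) = (\<lambda>z. g (fst z) * pd f w (snd z))"
    by (rule ext, rule pd_snd_prod(2), erule fd)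
  show "C1_fun (\<lambda>z. g (fst z) * f (snd z))"
    unfolding C1_fun_def
  proof (intro conjI ballI allI)
    show "continuous_on UNIV (\<lambda>z. g (fst z) * f (snd z))" by (rule cont_prod[OF gc fc])
  next
    fix v :: "real \<times> 'a" and z assume v: "v \<in> Basis"
    then show "(\<lambda>h. g (fst (z + h *\<^sub>R v)) * f (snd (z + h *\<^sub>R v))) differentiable at 0"
    proof (cases rule: Basis_prod_cases)
      case 1 then show ?thesis using pd_fst_prod(1)[OF g, where f=f and z=z] by simp
    next
      case (2 w) then show ?thesis using pd_snd_prod(1)[OF fd[of w "snd z"], where g=g] by simp
    qed
  next
    fix v :: "real \<times> 'a" assume v: "v \<in> Basis"
    then show "continuous_on UNIV (pd (\<lambda>z. g (fst z) * f (snd z)) v)"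
      by (cases rule: Basis_prod_cases) (use P1 P2 cont_prod g1 fc gc pc in auto)
  qed
qed

lemma C2_prod:
  fixes f :: "'a::euclidean_space \<Rightarrow> real"
  assumes g: "C2w g g1 g2" and f: "C2_fun f"
  shows "C2_fun (\<lambda>z. g (fst z) * f (snd z))"
proof -
  have gd: "\<And>x. (g has_real_derivative g1 x) (at x)" and g1d: "\<And>x. (g1 has_real_derivative g2 x) (at x)"
    and g2c: "continuous_on UNIV g2" using g unfolding C2w_def by auto
  have g1c: "continuous_on UNIV g1" using g1d by (meson DERIV_isCont continuous_at_imp_continuous_on)
  have f1: "C1_fun f" and f2: "\<And>w. w \<in> Basis \<Longrightarrow> C1_fun (pd f w)" using f unfolding C2_fun_def by auto
  note A = C1_prod[OF gd g1c f1]
  show ?thesis unfolding C2_fun_def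
  proof (intro conjI ballI)
    show "C1_fun (\<lambda>z. g (fst z) * f (snd z))" by (rule A(1))
  next
    fix v :: "real \<times> 'a" assume v: "v \<in> Basis"
    then show "C1_fun (pd (\<lambda>z. g (fst z) * f (snd z)) v)"
      by (cases rule: Basis_prod_cases) (use A(2,3) C1_prod(1)[OF g1d g2c f1] C1_prod(1)[OF gd g1c f2] in auto)
  qed
qed

lemma psf: "pair_sigma_finite (lborel::real measure) (lborel::'b::euclidean_space measure)"
  by (intro pair_sigma_finite.intro lborel.sigma_finite_measure_axioms)

lemma ennreal_ind_le: "(indicator S x :: ennreal) * g \<le> indicator S x + g^2"
proof (cases "x \<in> S")
  case True
  show ?thesis
  proof (cases "g \<le> 1")
    case True then show ?thesis using \<open>x \<in> S\<close> by (simp add: add_increasing2)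
  next
    case False
    then have "g * 1 \<le> g * g" by (intro mult_left_mono) auto
    then show ?thesis using \<open>x \<in> S\<close> by (simp add: power2_eq_square add_increasing)
  qed
qed simp

lemma abs_bound:
  fixes Q :: "real \<times> 'b::euclidean_space \<Rightarrow> real"
  assumes Q[measurable]: "Q \<in> borel_measurable lborel"
    and A: "(\<integral>\<^sup>+ x. (\<integral>\<^sup>+ m. ennreal \<bar>Q (m,x)\<bar> \<partial>lborel)\<^sup>2 \<partial>lborel) \<le> A"
    and G[measurable]: "G \<in> borel_measurable lborel" and Gb: "\<And>m. \<bar>G m\<bar> \<le> Gb"
    and W[measurable]: "W \<in> borel_measurable lborel" and Wb: "\<And>x. \<bar>W x\<bar> \<le> Wb * indicator S x"
    and Wb0: "0 \<le> Wb"
    and S[measurable]: "S \<in> sets lborel"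
  shows "(\<integral>\<^sup>+ z. ennreal \<bar>Q z * G (fst z) * W (snd z)\<bar> \<partial>lborel) \<le> ennreal (Gb*Wb) * (emeasure lborel S + A)"
proof -
  have Gb0: "0 \<le> Gb" using Gb[of 0] by linarith
  have Q2[measurable]: "Q \<in> borel_measurable (lborel \<Otimes>\<^sub>M lborel)" using Q by (simp add: lborel_prod)
  let ?g = "\<lambda>x. \<integral>\<^sup>+ m. ennreal \<bar>Q (m,x)\<bar> \<partial>lborel"
  have "(\<integral>\<^sup>+ z. ennreal \<bar>Q z * G (fst z) * W (snd z)\<bar> \<partial>lborel)
      = (\<integral>\<^sup>+ z. ennreal \<bar>Q z * G (fst z) * W (snd z)\<bar> \<partial>(lborel \<Otimes>\<^sub>M lborel))"
    by (simp add: lborel_prod)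
  also have "\<dots> = (\<integral>\<^sup>+ x. (\<integral>\<^sup>+ m. ennreal \<bar>Q (m,x) * G m * W x\<bar> \<partial>lborel) \<partial>lborel)"
  proof -
    have mQ: "(\<lambda>z. ennreal \<bar>Q z * G (fst z) * W (snd z)\<bar>) \<in> borel_measurable (lborel \<Otimes>\<^sub>M lborel)"
      by measurable
    show ?thesis using pair_sigma_finite.nn_integral_snd[OF psf mQ] by simp
  qed
  also have "\<dots> \<le> (\<integral>\<^sup>+ x. ennreal (Gb*Wb) * (indicator S x * ?g x) \<partial>lborel)"
  proof (rule nn_integral_mono)
    fix x :: 'b
    have "(\<integral>\<^sup>+ m. ennreal \<bar>Q (m,x) * G m * W x\<bar> \<partial>lborel)
        \<le> (\<integral>\<^sup>+ m. (ennreal (Gb*Wb) * indicator S x) * ennreal \<bar>Q (m,x)\<bar> \<partial>lborel)"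
    proof (rule nn_integral_mono)
      fix m
      have "\<bar>Q (m,x) * G m * W x\<bar> \<le> \<bar>Q (m,x)\<bar> * (Gb * (Wb * indicator S x))"
      proof -
        have "\<bar>G m\<bar> * \<bar>W x\<bar> \<le> Gb * (Wb * indicator S x)"
          by (rule mult_mono[OF Gb Wb]) (auto simp: Gb0)
        then show ?thesis unfolding abs_mult mult.assoc by (intro mult_left_mono) auto
      qed
      then show "ennreal \<bar>Q (m,x) * G m * W x\<bar> \<le> (ennreal (Gb*Wb) * indicator S x) * ennreal \<bar>Q (m,x)\<bar>"
        using Gb0 Wb0
        by (auto simp: indicator_def ennreal_mult[symmetric] intro!: ennreal_leI simp: algebra_simps)
    qed
    also have "\<dots> = ennreal (Gb*Wb) * (indicator S x * ?g x)"
      by (subst nn_integral_cmult) (auto simp: mult.assoc)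
    finally show "(\<integral>\<^sup>+ m. ennreal \<bar>Q (m,x) * G m * W x\<bar> \<partial>lborel) \<le> ennreal (Gb*Wb) * (indicator S x * ?g x)" .
  qed
  also have "\<dots> = ennreal (Gb*Wb) * (\<integral>\<^sup>+ x. indicator S x * ?g x \<partial>lborel)"
    by (rule nn_integral_cmult) measurable
  also have "\<dots> \<le> ennreal (Gb*Wb) * (\<integral>\<^sup>+ x. indicator S x + (?g x)\<^sup>2 \<partial>lborel)"
    by (intro mult_left_mono nn_integral_mono ennreal_ind_le) auto
  also have "(\<integral>\<^sup>+ x. indicator S x + (?g x)\<^sup>2 \<partial>lborel) = emeasure lborel S + (\<integral>\<^sup>+ x. (?g x)\<^sup>2 \<partial>lborel)"
    by (subst nn_integral_add) (auto simp: nn_integral_indicator[OF S])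
  also have "\<dots> \<le> emeasure lborel S + A" using A by (intro add_left_mono)
  finally show ?thesis by (simp add: mult_left_mono)
qed

lemma abs_integrable:
  fixes Q :: "real \<times> 'b::euclidean_space \<Rightarrow> real"
  assumes Q[measurable]: "Q \<in> borel_measurable lborel"
    and A: "(\<integral>\<^sup>+ x. (\<integral>\<^sup>+ m. ennreal \<bar>Q (m,x)\<bar> \<partial>lborel)\<^sup>2 \<partial>lborel) \<le> A" and Afin: "A < \<infinity>"
    and G[measurable]: "G \<in> borel_measurable lborel" and Gb: "\<And>m. \<bar>G m\<bar> \<le> Gb"
    and W[measurable]: "W \<in> borel_measurable lborel" and Wb: "\<And>x. \<bar>W x\<bar> \<le> Wb * indicator S x"
    and Wb0: "0 \<le> Wb"
    and S[measurable]: "S \<in> sets lborel" and Sfin: "emeasure lborel S < \<infinity>"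
  shows "integrable lborel (\<lambda>z. Q z * G (fst z) * W (snd z))"
    and "\<bar>\<integral> z. Q z * G (fst z) * W (snd z) \<partial>lborel\<bar> \<le> Gb * Wb * (measure lborel S + enn2real A)"
proof -
  have Gb0: "0 \<le> Gb" using Gb[of 0] by linarith
  note B = abs_bound[OF Q A G Gb W Wb Wb0 S]
  have e: "ennreal (Gb*Wb) * (emeasure lborel S + A) = ennreal (Gb * Wb * (measure lborel S + enn2real A))"
    using Sfin Afin Gb0 Wb0
    by (simp add: emeasure_eq_ennreal_measure ennreal_mult ennreal_plus[symmetric] less_top[symmetric])
  have fin: "ennreal (Gb*Wb) * (emeasure lborel S + A) < \<infinity>"
    unfolding e by simp
  have Q2[measurable]: "Q \<in> borel_measurable (lborel \<Otimes>\<^sub>M lborel)" using Q by (simp add: lborel_prod)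
  have "(\<lambda>z. Q z * G (fst z) * W (snd z)) \<in> borel_measurable (lborel \<Otimes>\<^sub>M lborel)" by measurable
  then have mm: "(\<lambda>z. Q z * G (fst z) * W (snd z)) \<in> borel_measurable lborel" by (simp add: lborel_prod)
  show I: "integrable lborel (\<lambda>z. Q z * G (fst z) * W (snd z))"
    unfolding integrable_iff_bounded using B fin mm by (auto simp: real_norm_def)
  have "ennreal \<bar>\<integral> z. Q z * G (fst z) * W (snd z) \<partial>lborel\<bar> \<le> (\<integral>\<^sup>+ z. ennreal \<bar>Q z * G (fst z) * W (snd z)\<bar> \<partial>lborel)"
    using integral_norm_bound_ennreal[OF I] by (simp add: real_norm_def)
  also note B
  also note e
  finally have "ennreal \<bar>\<integral> z. Q z * G (fst z) * W (snd z) \<partial>lborel\<bar> \<le> ennreal (Gb * Wb * (measure lborel S + enn2real A))" .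
  then show "\<bar>\<integral> z. Q z * G (fst z) * W (snd z) \<partial>lborel\<bar> \<le> Gb * Wb * (measure lborel S + enn2real A)"
  proof -
    have nn: "0 \<le> Gb * Wb * (measure lborel S + enn2real A)" using Gb0 Wb0 by simp
    assume "ennreal \<bar>\<integral> z. Q z * G (fst z) * W (snd z) \<partial>lborel\<bar> \<le> ennreal (Gb * Wb * (measure lborel S + enn2real A))"
    then show ?thesis using nn by (simp add: ennreal_le_iff)
  qed
qed

lemma abs_fubini:
  fixes Q :: "real \<times> 'b::euclidean_space \<Rightarrow> real"
  assumes I: "integrable lborel (\<lambda>z. Q z * G (fst z) * W (snd z))"
  shows "(\<integral> z. Q z * G (fst z) * W (snd z) \<partial>lborel) = (\<integral> x. W x * (\<integral> m. Q (m,x) * G m \<partial>lborel) \<partial>lborel)"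
proof -
  have I2: "integrable (lborel \<Otimes>\<^sub>M lborel) (case_prod (\<lambda>m x. Q (m,x) * G m * W x))"
    using I by (simp add: lborel_prod case_prod_beta')
  have "(\<integral> x. (\<integral> m. Q (m,x) * G m * W x \<partial>lborel) \<partial>lborel) = integral\<^sup>L (lborel \<Otimes>\<^sub>M lborel) (case_prod (\<lambda>m x. Q (m,x) * G m * W x))"
    by (rule pair_sigma_finite.integral_snd[OF psf I2])
  also have "\<dots> = (\<integral> z. Q z * G (fst z) * W (snd z) \<partial>lborel)"
    by (simp add: lborel_prod case_prod_beta')
  finally show ?thesis by (simp add: integral_mult_left_zero mult.commute)
qed

lemma abs_dct:
  fixes Q :: "real \<times> 'b::euclidean_space \<Rightarrow> real"
  assumes Q[measurable]: "Q \<in> borel_measurable lborel"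
    and I: "integrable lborel (\<lambda>z. Q z * G (fst z) * W (snd z))"
    and G[measurable]: "G \<in> borel_measurable lborel"
    and W[measurable]: "W \<in> borel_measurable lborel"
    and be[measurable]: "\<And>n. \<beta> n \<in> borel_measurable lborel" and b1: "\<And>n m. \<bar>\<beta> n m\<bar> \<le> 1"
    and bl: "\<And>m. (\<lambda>n. \<beta> n m) \<longlonglongrightarrow> 1"
  shows "(\<lambda>n. \<integral> z. Q z * (G (fst z) * \<beta> n (fst z)) * W (snd z) \<partial>lborel) \<longlonglongrightarrow> (\<integral> z. Q z * G (fst z) * W (snd z) \<partial>lborel)"
proof (rule integral_dominated_convergence[where w="\<lambda>z. \<bar>Q z * G (fst z) * W (snd z)\<bar>"])
  have Q2[measurable]: "Q \<in> borel_measurable (lborel \<Otimes>\<^sub>M lborel)" using Q by (simp add: lborel_prod)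
  have "(\<lambda>z. Q z * G (fst z) * W (snd z)) \<in> borel_measurable (lborel \<Otimes>\<^sub>M lborel)" by measurable
  then show "(\<lambda>z. Q z * G (fst z) * W (snd z)) \<in> borel_measurable lborel" by (simp add: lborel_prod)
  fix n
  have "(\<lambda>z. Q z * (G (fst z) * \<beta> n (fst z)) * W (snd z)) \<in> borel_measurable (lborel \<Otimes>\<^sub>M lborel)" by measurable
  then show "(\<lambda>z. Q z * (G (fst z) * \<beta> n (fst z)) * W (snd z)) \<in> borel_measurable lborel" by (simp add: lborel_prod)
  show "integrable lborel (\<lambda>z. \<bar>Q z * G (fst z) * W (snd z)\<bar>)" using I by (rule integrable_abs)
  show "AE z in lborel. norm (Q z * (G (fst z) * \<beta> n (fst z)) * W (snd z)) \<le> \<bar>Q z * G (fst z) * W (snd z)\<bar>"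
  proof (intro AE_I2)
    fix z :: "real \<times> 'b"
    have "\<bar>Q z\<bar> * (\<bar>G (fst z)\<bar> * \<bar>\<beta> n (fst z)\<bar>) * \<bar>W (snd z)\<bar> \<le> \<bar>Q z\<bar> * (\<bar>G (fst z)\<bar> * 1) * \<bar>W (snd z)\<bar>"
      by (intro mult_right_mono mult_left_mono b1) auto
    then show "norm (Q z * (G (fst z) * \<beta> n (fst z)) * W (snd z)) \<le> \<bar>Q z * G (fst z) * W (snd z)\<bar>"
      by (simp add: abs_mult)
  qed
next
  show "AE z in lborel. (\<lambda>n. Q z * (G (fst z) * \<beta> n (fst z)) * W (snd z)) \<longlonglongrightarrow> Q z * G (fst z) * W (snd z)"
  proof (intro AE_I2)
    fix z :: "real \<times> 'b"
    have "(\<lambda>n. Q z * (G (fst z) * \<beta> n (fst z)) * W (snd z)) \<longlonglongrightarrow> Q z * (G (fst z) * 1) * W (snd z)"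
      by (intro tendsto_intros bl)
    then show "(\<lambda>n. Q z * (G (fst z) * \<beta> n (fst z)) * W (snd z)) \<longlonglongrightarrow> Q z * G (fst z) * W (snd z)" by simp
  qed
qed

lemma abs_L2:
  fixes Q :: "real \<times> 'b::euclidean_space \<Rightarrow> real"
  assumes Q[measurable]: "Q \<in> borel_measurable lborel"
    and A: "(\<integral>\<^sup>+ x. (\<integral>\<^sup>+ m. ennreal \<bar>Q (m,x)\<bar> \<partial>lborel)\<^sup>2 \<partial>lborel) \<le> A" and Afin: "A < \<infinity>"
    and G[measurable]: "G \<in> borel_measurable lborel" and Gb: "\<And>m. \<bar>G m\<bar> \<le> Gb"
  shows "(\<lambda>x. \<integral> m. Q (m,x) * G m \<partial>lborel) \<in> borel_measurable lborel"
    and "integrable lborel (\<lambda>x. (\<integral> m. Q (m,x) * G m \<partial>lborel)\<^sup>2)"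
proof -
  have Gb0: "0 \<le> Gb" using Gb[of 0] by linarith
  have Q2[measurable]: "Q \<in> borel_measurable (lborel \<Otimes>\<^sub>M lborel)" using Q by (simp add: lborel_prod)
  show M: "(\<lambda>x. \<integral> m. Q (m,x) * G m \<partial>lborel) \<in> borel_measurable lborel" by measurable
  let ?g = "\<lambda>x. \<integral>\<^sup>+ m. ennreal \<bar>Q (m,x)\<bar> \<partial>lborel"
  have pt: "ennreal \<bar>\<integral> m. Q (m,x) * G m \<partial>lborel\<bar> \<le> ennreal Gb * ?g x" for x
  proof (cases "integrable lborel (\<lambda>m. Q (m,x) * G m)")
    case True
    have "ennreal \<bar>\<integral> m. Q (m,x) * G m \<partial>lborel\<bar> \<le> (\<integral>\<^sup>+ m. ennreal \<bar>Q (m,x) * G m\<bar> \<partial>lborel)"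
      using integral_norm_bound_ennreal[OF True] by (simp add: real_norm_def)
    also have "\<dots> \<le> (\<integral>\<^sup>+ m. ennreal Gb * ennreal \<bar>Q (m,x)\<bar> \<partial>lborel)"
    proof (rule nn_integral_mono)
      fix m
      have "\<bar>Q (m,x) * G m\<bar> \<le> Gb * \<bar>Q (m,x)\<bar>"
        unfolding abs_mult using Gb[of m] by (simp add: mult.commute mult_right_mono)
      then show "ennreal \<bar>Q (m,x) * G m\<bar> \<le> ennreal Gb * ennreal \<bar>Q (m,x)\<bar>"
        using Gb0 by (simp add: ennreal_mult[symmetric] ennreal_leI)
    qed
    also have "\<dots> = ennreal Gb * ?g x" by (rule nn_integral_cmult) measurable
    finally show ?thesis .
  next
    case False
    then show ?thesis by (simp add: not_integrable_integral_eq)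
  qed
  have "(\<integral>\<^sup>+ x. ennreal (norm ((\<integral> m. Q (m,x) * G m \<partial>lborel)\<^sup>2)) \<partial>lborel)
       \<le> (\<integral>\<^sup>+ x. (ennreal Gb)\<^sup>2 * (?g x)\<^sup>2 \<partial>lborel)"
  proof (rule nn_integral_mono)
    fix x
    have "ennreal (norm ((\<integral> m. Q (m,x) * G m \<partial>lborel)\<^sup>2)) = (ennreal \<bar>\<integral> m. Q (m,x) * G m \<partial>lborel\<bar>)\<^sup>2"
      by (simp add: ennreal_power real_norm_def)
    also have "\<dots> \<le> (ennreal Gb * ?g x)\<^sup>2" by (intro power_mono pt) auto
    finally show "ennreal (norm ((\<integral> m. Q (m,x) * G m \<partial>lborel)\<^sup>2)) \<le> (ennreal Gb)\<^sup>2 * (?g x)\<^sup>2"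
      by (simp add: power_mult_distrib)
  qed
  also have "\<dots> = (ennreal Gb)\<^sup>2 * (\<integral>\<^sup>+ x. (?g x)\<^sup>2 \<partial>lborel)" by (rule nn_integral_cmult) measurable
  also have "\<dots> \<le> (ennreal Gb)\<^sup>2 * A" using A by (rule mult_left_mono) auto
  also have "\<dots> < \<infinity>"
  proof -
    have "(ennreal Gb)\<^sup>2 = ennreal (Gb\<^sup>2)" by (simp add: ennreal_power Gb0)
    then show ?thesis using Afin by (simp add: ennreal_mult_less_top)
  qed
  finally show "integrable lborel (\<lambda>x. (\<integral> m. Q (m,x) * G m \<partial>lborel)\<^sup>2)"
    unfolding integrable_iff_bounded using M by auto
qed

definition AX :: "'n \<Rightarrow> real \<Rightarrow> (real \<Rightarrow> real^('n::finite) \<Rightarrow> real \<Rightarrow> real) \<Rightarrow> ennreal" where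
  "AX i0 T q = (SUP t\<in>{0<..T}. \<integral>\<^sup>+ x. (\<integral>\<^sup>+ m. indicator {x $ i0..} m * ennreal \<bar>q m x t\<bar> \<partial>lborel)\<^sup>2 \<partial>lborel)"

lemma ind_Tset: "indicator (Tset i0) (m,x) = (indicator {x $ i0..} m :: real)"
  by (auto simp: Tset_def indicator_def)

lemma inX_facts:
  fixes q :: "real \<Rightarrow> real^'n::finite \<Rightarrow> real \<Rightarrow> real"
  assumes X: "inX i0 T q" and t: "t \<in> {0<..T}"
  shows "(\<lambda>z. indicator (Tset i0) z * q (fst z) (snd z) t) \<in> borel_measurable lborel"
    and "(\<integral>\<^sup>+ x. (\<integral>\<^sup>+ m. ennreal \<bar>indicator (Tset i0) (m,x) * q m x t\<bar> \<partial>lborel)\<^sup>2 \<partial>lborel) \<le> AX i0 T q"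
    and "AX i0 T q < \<infinity>"
proof -
  show "(\<lambda>z. indicator (Tset i0) z * q (fst z) (snd z) t) \<in> borel_measurable lborel"
    using X t unfolding inX_def by auto
  show "AX i0 T q < \<infinity>" using X unfolding inX_def AX_def by auto
  have e: "ennreal \<bar>indicator (Tset i0) (m,x) * q m x t\<bar> = indicator {x $ i0..} m * ennreal \<bar>q m x t\<bar>" for m x
    by (auto simp: Tset_def indicator_def)
  show "(\<integral>\<^sup>+ x. (\<integral>\<^sup>+ m. ennreal \<bar>indicator (Tset i0) (m,x) * q m x t\<bar> \<partial>lborel)\<^sup>2 \<partial>lborel) \<le> AX i0 T q"
    unfolding e AX_def using t by (rule SUP_upper)
qed

lemma time_dct:
  fixes q :: "real \<Rightarrow> real^'n::finite \<Rightarrow> real \<Rightarrow> real" and W :: "real^'n \<Rightarrow> real"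
  assumes X: "inX i0 T q" and t: "t \<in> {0<..T}"
    and H[measurable]: "H \<in> borel_measurable lborel" and Hb: "\<And>m. \<bar>H m\<bar> \<le> Hb"
    and W[measurable]: "W \<in> borel_measurable lborel" and Wb: "\<And>x. \<bar>W x\<bar> \<le> Wb * indicator S x"
    and Wb0: "0 \<le> Wb"
    and S[measurable]: "S \<in> sets lborel" and Sfin: "emeasure lborel S < \<infinity>"
    and be[measurable]: "\<And>n. \<beta> n \<in> borel_measurable lborel" and b1: "\<And>n m. \<bar>\<beta> n m\<bar> \<le> 1"
    and bl: "\<And>m. (\<lambda>n. \<beta> n m) \<longlonglongrightarrow> 1"
  shows "(\<lambda>n. \<integral> s. indicator {0<..t} s * (\<integral> z. (indicator (Tset i0) z * q (fst z) (snd z) s) * (H (fst z) * \<beta> n (fst z)) * W (snd z) \<partial>lborel) \<partial>lborel)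
     \<longlonglongrightarrow> (\<integral> s. indicator {0<..t} s * (\<integral> x. W x * (\<integral> m. (indicator (Tset i0) (m,x) * q m x s) * H m \<partial>lborel) \<partial>lborel) \<partial>lborel)"
proof -
  define Q where "Q = (\<lambda>s (z::real \<times> (real^'n)). indicator (Tset i0) z * q (fst z) (snd z) s)"
  define C where "C = Hb * Wb * (measure lborel S + enn2real (AX i0 T q))"
  have Hb0: "0 \<le> Hb" using Hb[of 0] by linarith
  let ?sn = "\<lambda>n s. indicator {0<..t} s * (\<integral> z. Q s z * (H (fst z) * \<beta> n (fst z)) * W (snd z) \<partial>lborel)"
  let ?f = "\<lambda>s. indicator {0<..t} s * (\<integral> x. W x * (\<integral> m. Q s (m,x) * H m \<partial>lborel) \<partial>lborel)"
  have pw: "(\<lambda>n. ?sn n s) \<longlonglongrightarrow> ?f s" for s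
  proof (cases "s \<in> {0<..t}")
    case True
    then have s: "s \<in> {0<..T}" using t by auto
    note F = inX_facts[OF X s]
    have F1: "Q s \<in> borel_measurable lborel" using F(1) by (simp add: Q_def)
    have F2: "(\<integral>\<^sup>+ x. (\<integral>\<^sup>+ m. ennreal \<bar>Q s (m,x)\<bar> \<partial>lborel)\<^sup>2 \<partial>lborel) \<le> AX i0 T q"
      using F(2) by (simp add: Q_def)
    have I: "integrable lborel (\<lambda>z. Q s z * H (fst z) * W (snd z))"
      by (rule abs_integrable(1)[OF F1 F2 F(3) H Hb W Wb Wb0 S Sfin])
    have "(\<lambda>n. \<integral> z. Q s z * (H (fst z) * \<beta> n (fst z)) * W (snd z) \<partial>lborel) \<longlonglongrightarrow> (\<integral> z. Q s z * H (fst z) * W (snd z) \<partial>lborel)"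
      by (rule abs_dct[OF F1 I H W be b1 bl])
    also have "(\<integral> z. Q s z * H (fst z) * W (snd z) \<partial>lborel) = (\<integral> x. W x * (\<integral> m. Q s (m,x) * H m \<partial>lborel) \<partial>lborel)"
      by (rule abs_fubini[OF I])
    finally show ?thesis using True by simp
  next
    case False
    then show ?thesis by simp
  qed
  define P where "P = (\<lambda>(z::real \<times> (real^'n), s::real). indicator (Tset i0) z * indicator {0<..T} s * q (fst z) (snd z) s)"
  have P[measurable]: "P \<in> borel_measurable (lborel \<Otimes>\<^sub>M lborel)"
    using X unfolding inX_def P_def by (simp add: lborel_prod)
  have sn_eq: "?sn n s = indicator {0<..t} s * (\<integral> z. P (z,s) * (H (fst z) * \<beta> n (fst z)) * W (snd z) \<partial>lborel)" for n s
    using t by (cases "s \<in> {0<..t}") (auto simp: P_def Q_def)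
  have P3[measurable]: "P \<in> borel_measurable ((lborel \<Otimes>\<^sub>M lborel) \<Otimes>\<^sub>M lborel)"
    using P by (simp add: lborel_prod)
  have snm: "?sn n \<in> borel_measurable lborel" for n
  proof -
    have "(\<lambda>s. indicator {0<..t} s * (\<integral> z. P (z,s) * (H (fst z) * \<beta> n (fst z)) * W (snd z) \<partial>(lborel \<Otimes>\<^sub>M lborel)))
       \<in> borel_measurable lborel" by measurable
    moreover have "?sn n = (\<lambda>s. indicator {0<..t} s * (\<integral> z. P (z,s) * (H (fst z) * \<beta> n (fst z)) * W (snd z) \<partial>lborel))"
      by (rule ext) (rule sn_eq)
    ultimately show ?thesis by (simp add: lborel_prod)
  qed
  have fm: "?f \<in> borel_measurable lborel"
    by (rule borel_measurable_LIMSEQ_real[OF pw snm])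
  have bd: "norm (?sn n s) \<le> C * indicator {0<..t} s" for n s
  proof (cases "s \<in> {0<..t}")
    case True
    then have s: "s \<in> {0<..T}" using t by auto
    note F = inX_facts[OF X s]
    have F1: "Q s \<in> borel_measurable lborel" using F(1) by (simp add: Q_def)
    have F2: "(\<integral>\<^sup>+ x. (\<integral>\<^sup>+ m. ennreal \<bar>Q s (m,x)\<bar> \<partial>lborel)\<^sup>2 \<partial>lborel) \<le> AX i0 T q"
      using F(2) by (simp add: Q_def)
    have Gm: "(\<lambda>m. H m * \<beta> n m) \<in> borel_measurable lborel" by measurable
    have Gb: "\<bar>H m * \<beta> n m\<bar> \<le> Hb" for m
    proof -
      have "\<bar>H m\<bar> * \<bar>\<beta> n m\<bar> \<le> Hb * 1" by (rule mult_mono) (use Hb b1 Hb0 in auto)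
      then show ?thesis by (simp add: abs_mult)
    qed
    have "\<bar>\<integral> z. Q s z * (H (fst z) * \<beta> n (fst z)) * W (snd z) \<partial>lborel\<bar> \<le> C"
      using abs_integrable(2)[OF F1 F2 F(3) Gm Gb W Wb Wb0 S Sfin] unfolding C_def by simp
    then show ?thesis using True by simp
  next
    case False
    then show ?thesis by simp
  qed
  have wi: "integrable lborel (\<lambda>s. C * indicator {0<..t} s)"
    by (intro integrable_mult_right integrable_real_indicator) (use t in auto)
  show ?thesis
    using integral_dominated_convergence[OF fm snm wi _ AE_I2[OF bd]] pw unfolding Q_def by simp
qed

lemma pd_zero_open:
  fixes f :: "'a::real_normed_vector \<Rightarrow> real"
  assumes U: "open U" "x \<in> U" and z: "\<And>y. y \<in> U \<Longrightarrow> f y = 0"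
  shows "pd f v x = 0"
proof -
  have c: "continuous_on UNIV (\<lambda>h::real. x + h *\<^sub>R v)" by (intro continuous_intros)
  have o: "open ((\<lambda>h. x + h *\<^sub>R v) -` U)" by (rule open_vimage[OF U(1) c])
  have "((\<lambda>h. f (x + h *\<^sub>R v)) has_real_derivative 0) (at 0)"
  proof (rule has_field_derivative_transform_within_open[OF DERIV_const o])
    show "0 \<in> (\<lambda>h. x + h *\<^sub>R v) -` U" using U(2) by simp
    fix h assume "h \<in> (\<lambda>h. x + h *\<^sub>R v) -` U"
    then show "0 = f (x + h *\<^sub>R v)" using z by simp
  qed
  then show ?thesis by (simp add: pd_def DERIV_imp_deriv)
qed

lemma C2c_facts:
  fixes F :: "'a::euclidean_space \<Rightarrow> real"
  assumes "C2c F"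
  defines "S \<equiv> closure {x. F x \<noteq> 0}"
  shows "compact S" "C1_fun F" "\<And>v. v \<in> Basis \<Longrightarrow> C1_fun (pd F v)"
    "\<And>x. x \<notin> S \<Longrightarrow> F x = 0"
    "\<And>x v. x \<notin> S \<Longrightarrow> pd F v x = 0"
    "\<And>x v w. x \<notin> S \<Longrightarrow> pd (pd F v) w x = 0"
proof -
  show "compact S" using assms unfolding C2c_def by simp
  show "C1_fun F" "\<And>v. v \<in> Basis \<Longrightarrow> C1_fun (pd F v)"
    using assms unfolding C2c_def C2_fun_def by simp_all
  have o: "open (- S)" unfolding S_def by (rule open_Compl) simp
  show z0: "\<And>x. x \<notin> S \<Longrightarrow> F x = 0"
  proof (rule ccontr)
    fix x assume "x \<notin> S" "F x \<noteq> 0"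
    then have "x \<in> {x. F x \<noteq> 0}" by simp
    then have "x \<in> S" unfolding S_def by (rule rev_subsetD[OF _ closure_subset])
    with \<open>x \<notin> S\<close> show False by simp
  qed
  show z1: "\<And>x v. x \<notin> S \<Longrightarrow> pd F v x = 0"
  proof -
    fix x v assume "x \<notin> S"
    show "pd F v x = 0" by (rule pd_zero_open[OF o]) (use \<open>x \<notin> S\<close> z0 in auto)
  qed
  show "\<And>x v w. x \<notin> S \<Longrightarrow> pd (pd F v) w x = 0"
  proof -
    fix x v w assume "x \<notin> S"
    show "pd (pd F v) w x = 0" by (rule pd_zero_open[OF o]) (use \<open>x \<notin> S\<close> z1 in auto)
  qed
qed

lemma support_bound:
  fixes W :: "'a::euclidean_space \<Rightarrow> real"
  assumes "continuous_on UNIV W" "compact S" "\<And>x. x \<notin> S \<Longrightarrow> W x = 0"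
  obtains Wb where "0 \<le> Wb" "\<And>x. \<bar>W x\<bar> \<le> Wb * indicator S x"
proof -
  have "compact (W ` S)" by (rule compact_continuous_image[OF continuous_on_subset[OF assms(1)] assms(2)]) auto
  then have "bounded (W ` S)" by (rule compact_imp_bounded)
  then obtain b where b: "\<And>y. y \<in> W ` S \<Longrightarrow> norm y \<le> b" unfolding bounded_iff by blast
  show ?thesis
  proof (rule that[of "max b 0"])
    fix x show "\<bar>W x\<bar> \<le> max b 0 * indicator S x"
    proof (cases "x \<in> S")
      case True
      then have "norm (W x) \<le> b" using b by blast
      then show ?thesis using True by simp
    next
      case False
      then show ?thesis using assms(3)[of x] by simp
    qed
  qed simp
qed

theorem proposition1:
  fixes B :: "real^'n \<Rightarrow> real^'n" and i0 :: 'n and T :: real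
    and q :: "real \<Rightarrow> real^'n \<Rightarrow> real \<Rightarrow> real" and H :: "real \<Rightarrow> real"
  assumes "T > 0"
    and "C1b_field B"
    and "weak_sol i0 T B q"
    and "C2b_real H"
    and "compact (closure {m. deriv H m \<noteq> 0})"
  shows "(\<forall>t\<in>{0<..T}. (\<lambda>x. qH i0 H q x t) \<in> borel_measurable lborel \<and>
            integrable lborel (\<lambda>x. (qH i0 H q x t)\<^sup>2)) \<and>
         (\<forall>F. C2c F \<longrightarrow> (\<forall>t\<in>{0<..T}.
            (\<integral> x. F x * qH i0 H q x t \<partial>lborel) =
            (\<integral> s. indicator {0<..t} s * (\<integral> x. genL B F x * qH i0 H q x s \<partial>lborel) \<partial>lborel)
            + 1/2 * (\<integral> s. indicator {0<..t} s *
                (\<integral> y. deriv H (y $ i0) * F y * trace i0 q y s \<partial>lborel) \<partial>lborel)))"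
proof -
  have X: "inX i0 T q" using assms(3) unfolding weak_sol_def by blast
  have WS: "\<forall>\<Phi>. C2c \<Phi> \<longrightarrow> (\<forall>t\<in>{0<..T}.
        (\<integral> z. indicator (Tset i0) z * \<Phi> z * q (fst z) (snd z) t \<partial>lborel) =
        (\<integral> s. indicator {0<..t} s *
            (\<integral> z. indicator (Tset i0) z * q (fst z) (snd z) s * LPhi i0 B \<Phi> z \<partial>lborel) \<partial>lborel)
        + 1/2 * (\<integral> s. indicator {0<..t} s *
            (\<integral> y. pd \<Phi> (1, 0) (y $ i0, y) * trace i0 q y s \<partial>lborel) \<partial>lborel))"
    using assms(3) unfolding weak_sol_def by blast
  have H2: "C2_fun H" and Hbd: "bounded (range H)" using assms(4) unfolding C2b_real_def by auto
  obtain Hb where Hb: "\<And>m. \<bar>H m\<bar> \<le> Hb" using Hbd unfolding bounded_iff by auto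
  have Hw: "C2w H (deriv H) (pd (deriv H) 1)" by (rule C2_fun_C2w[OF H2])
  have Hc: "continuous_on UNIV H" using Hw unfolding C2w_def
    by (meson DERIV_isCont continuous_at_imp_continuous_on)
  have Hm[measurable]: "H \<in> borel_measurable lborel"
    using borel_measurable_continuous_onI[OF Hc] by simp
  define Qt where "Qt = (\<lambda>s (z::real \<times> (real^'n)). indicator (Tset i0) z * q (fst z) (snd z) s)"
  have qH_eq: "qH i0 H q x s = (\<integral> m. Qt s (m,x) * H m \<partial>lborel)" for x s
    unfolding qH_def Qt_def by (simp add: ind_Tset mult_ac)
  have Fa: "Qt s \<in> borel_measurable lborel"
    "(\<integral>\<^sup>+ x. (\<integral>\<^sup>+ m. ennreal \<bar>Qt s (m,x)\<bar> \<partial>lborel)\<^sup>2 \<partial>lborel) \<le> AX i0 T q"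
    "AX i0 T q < \<infinity>" if s: "s \<in> {0<..T}" for s
    using inX_facts[OF X s] by (simp_all add: Qt_def)
  have P1: "\<forall>t\<in>{0<..T}. (\<lambda>x. qH i0 H q x t) \<in> borel_measurable lborel \<and>
            integrable lborel (\<lambda>x. (qH i0 H q x t)\<^sup>2)"
  proof
    fix t assume t: "t \<in> {0<..T}"
    note L = abs_L2[OF Fa(1)[OF t] Fa(2)[OF t] Fa(3)[OF t] Hm Hb]
    show "(\<lambda>x. qH i0 H q x t) \<in> borel_measurable lborel \<and> integrable lborel (\<lambda>x. (qH i0 H q x t)\<^sup>2)"
      unfolding qH_eq using L by simp
  qed
  have chiw: "C2w chi chi1 chi2" unfolding C2w_def using chi_d chi1_d chi2_cont by auto
  have chic: "continuous_on UNIV chi" using chi_d by (meson DERIV_isCont continuous_at_imp_continuous_on)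
  have chim[measurable]: "chi \<in> borel_measurable borel" by (rule borel_measurable_continuous_onI[OF chic])
  define \<beta> where "\<beta> = (\<lambda>(n::nat) x. chi (1*x + - real n) * chi ((-1)*x + - real n))"
  define \<beta>1 where "\<beta>1 = (\<lambda>(n::nat) x. (1 * chi1 (1*x + - real n)) * chi ((-1)*x + - real n)
       + chi (1*x + - real n) * ((-1) * chi1 ((-1)*x + - real n)))"
  define \<beta>2 where "\<beta>2 = (\<lambda>(n::nat) x. (1 * 1 * chi2 (1*x + - real n)) * chi ((-1)*x + - real n)
       + 2 * ((1 * chi1 (1*x + - real n)) * ((-1) * chi1 ((-1)*x + - real n)))
       + chi (1*x + - real n) * ((-1) * (-1) * chi2 ((-1)*x + - real n)))"
  have \<beta>w: "C2w (\<beta> n) (\<beta>1 n) (\<beta>2 n)" for n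
    unfolding \<beta>_def \<beta>1_def \<beta>2_def
    by (rule C2w_mult[OF C2w_affine[OF chiw, of 1 "- real n"] C2w_affine[OF chiw, of "-1" "- real n"]])
  have bm[measurable]: "\<beta> n \<in> borel_measurable lborel" for n unfolding \<beta>_def by measurable
  have b1: "\<bar>\<beta> n m\<bar> \<le> 1" for n m
    unfolding \<beta>_def using chi_bounds[of "1*m + - real n"] chi_bounds[of "(-1)*m + - real n"]
    by (simp add: abs_mult mult_le_one)
  have bone: "\<beta> n m = 1" "\<beta>1 n m = 0" if "\<bar>m\<bar> \<le> real n" for n m
  proof -
    have a: "1*m + - real n \<le> 0" "(-1)*m + - real n \<le> 0" using that by auto
    show "\<beta> n m = 1" "\<beta>1 n m = 0" unfolding \<beta>_def \<beta>1_def
      by (simp_all only: chi_one[OF a(1)] chi_one[OF a(2)] chi1_zero[OF a(1)] chi1_zero[OF a(2)])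
  qed
  have bl: "(\<lambda>n. \<beta> n m) \<longlonglongrightarrow> 1" for m
  proof (rule tendsto_eventually)
    obtain N :: nat where N: "\<bar>m\<bar> \<le> real N" using real_arch_simple by blast
    show "\<forall>\<^sub>F n in sequentially. \<beta> n m = 1"
      unfolding eventually_sequentially
      by (rule exI[of _ N]) (use N in \<open>auto intro!: bone(1)\<close>)
  qed
  have bzero: "\<bar>m\<bar> < real n + 1" if "\<beta> n m \<noteq> 0" for n m
  proof (rule ccontr)
    assume "\<not> \<bar>m\<bar> < real n + 1"
    then have "1 \<le> 1*m + - real n \<or> 1 \<le> (-1)*m + - real n" by auto
    then show False using that unfolding \<beta>_def by (auto simp: chi_zero)
  qed
  define G where "G = (\<lambda>n m. H m * \<beta> n m)"
  define G1 where "G1 = (\<lambda>n m. deriv H m * \<beta> n m + H m * \<beta>1 n m)"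
  define G2 where "G2 = (\<lambda>n m. pd (deriv H) 1 m * \<beta> n m + 2 * (deriv H m * \<beta>1 n m) + H m * \<beta>2 n m)"
  have Gw: "C2w (G n) (G1 n) (G2 n)" for n
    unfolding G_def G1_def G2_def by (rule C2w_mult[OF Hw \<beta>w])
  have Gd: "\<And>x. (G n has_real_derivative G1 n x) (at x)" for n using Gw unfolding C2w_def by blast
  have G1c: "continuous_on UNIV (G1 n)" for n using Gw unfolding C2w_def
    by (meson DERIV_isCont continuous_at_imp_continuous_on)
  have P2: "\<forall>F. C2c F \<longrightarrow> (\<forall>t\<in>{0<..T}.
            (\<integral> x. F x * qH i0 H q x t \<partial>lborel) =
            (\<integral> s. indicator {0<..t} s * (\<integral> x. genL B F x * qH i0 H q x s \<partial>lborel) \<partial>lborel)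
            + 1/2 * (\<integral> s. indicator {0<..t} s *
                (\<integral> y. deriv H (y $ i0) * F y * trace i0 q y s \<partial>lborel) \<partial>lborel))"
  proof (intro allI impI ballI)
    fix F :: "real^'n \<Rightarrow> real" and t assume CF: "C2c F" and t: "t \<in> {0<..T}"
    define S where "S = closure {x. F x \<noteq> 0}"
    note CFf = C2c_facts[OF CF, folded S_def]
    have CF2: "C2_fun F" using CF unfolding C2c_def by simp
    have Sc: "compact S" using CFf(1) .
    have Fc: "continuous_on UNIV F" using CFf(2) unfolding C1_fun_def by simp
    have Bc: "\<And>i. continuous_on UNIV (\<lambda>x. B x $ i)" using assms(2) unfolding C1b_field_def C1_fun_def by simp
    have e_in: "axis i (1::real) \<in> (Basis :: (real^'n) set)" for i :: 'n by (simp add: axis_in_Basis_iff Basis_real_def)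
    have pdc: "continuous_on UNIV (pd F (axis i 1))" for i using CFf(2) e_in unfolding C1_fun_def by simp
    have pdpdc: "continuous_on UNIV (pd (pd F (axis i 1)) (axis i 1))" for i
      using CFf(3)[OF e_in] e_in unfolding C1_fun_def by simp
    have Lc: "continuous_on UNIV (genL B F)" unfolding genL_def[abs_def]
      by (intro continuous_intros Bc pdc pdpdc)
    have L0: "genL B F x = 0" if "x \<notin> S" for x using that CFf(5,6) by (simp add: genL_def)
    obtain Fb where Fb0: "0 \<le> Fb" and Fb: "\<And>x. \<bar>F x\<bar> \<le> Fb * indicator S x"
      using support_bound[OF Fc Sc CFf(4)] by blast
    obtain Lb where Lb0: "0 \<le> Lb" and Lb: "\<And>x. \<bar>genL B F x\<bar> \<le> Lb * indicator S x"
      using support_bound[OF Lc Sc L0] by blast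
    have Fm[measurable]: "F \<in> borel_measurable lborel" using borel_measurable_continuous_onI[OF Fc] by simp
    have Lm[measurable]: "genL B F \<in> borel_measurable lborel" using borel_measurable_continuous_onI[OF Lc] by simp
    have Sm[measurable]: "S \<in> sets lborel" unfolding S_def by (simp add: borel_closed)
    have Sfin: "emeasure lborel S < \<infinity>" by (rule emeasure_bounded_finite[OF compact_imp_bounded[OF Sc]])
    obtain R where R: "\<And>x. x \<in> S \<Longrightarrow> \<bar>x $ i0\<bar> \<le> R"
    proof -
      obtain a where "\<And>x. x \<in> S \<Longrightarrow> norm x \<le> a" using compact_imp_bounded[OF Sc] unfolding bounded_iff by blast
      then show ?thesis using that component_le_norm_cart order_trans by metis
    qed
    have Sin: "x \<in> S" if "F x \<noteq> 0" for x
    proof -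
      have "x \<in> {x. F x \<noteq> 0}" using that by simp
      then show ?thesis unfolding S_def by (rule rev_subsetD[OF _ closure_subset])
    qed
    define \<Phi> where "\<Phi> = (\<lambda>n (z::real \<times> (real^'n)). G n (fst z) * F (snd z))"
    have C2c\<Phi>: "C2c (\<Phi> n)" for n
    proof -
      note cp = C2_prod[OF Gw[of n] CF2]
      have "C2_fun (\<Phi> n)" unfolding \<Phi>_def using cp by simp
      moreover have "{z. \<Phi> n z \<noteq> 0} \<subseteq> {- real n - 1 .. real n + 1} \<times> S"
      proof
        fix z assume "z \<in> {z. \<Phi> n z \<noteq> 0}"
        then have "\<beta> n (fst z) \<noteq> 0" "F (snd z) \<noteq> 0" unfolding \<Phi>_def G_def by auto
        then show "z \<in> {- real n - 1 .. real n + 1} \<times> S" using bzero Sin by (cases z) force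
      qed
      then have "bounded {z. \<Phi> n z \<noteq> 0}"
        by (rule bounded_subset[rotated]) (intro bounded_Times compact_imp_bounded Sc compact_Icc)
      ultimately show ?thesis unfolding C2c_def by (simp add: compact_closure)
    qed
    have pd1: "pd (\<Phi> n) (1,0) = (\<lambda>z. G1 n (fst z) * F (snd z))" for n
      unfolding \<Phi>_def by (rule C1_prod(2)[OF Gd G1c CFf(2)])
    have pdx: "pd (\<Phi> n) (0, axis i 1) = (\<lambda>z. G n (fst z) * pd F (axis i 1) (snd z))" for n i
      unfolding \<Phi>_def by (rule C1_prod(3)[OF Gd G1c CFf(2) e_in])
    have pdxx: "pd (\<lambda>z. G n (fst z) * pd F (axis i 1) (snd z)) (0, axis i 1)
        = (\<lambda>z. G n (fst z) * pd (pd F (axis i 1)) (axis i 1) (snd z))" for n i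
      by (rule C1_prod(3)[OF Gd G1c CFf(3)[OF e_in] e_in])
    have LPhi_eq: "LPhi i0 B (\<Phi> n) z = G n (fst z) * genL B F (snd z)" for n z
      unfolding LPhi_def genL_def by (simp add: pdx pdxx sum_distrib_left algebra_simps)
    have E: "(\<integral> z. indicator (Tset i0) z * \<Phi> n z * q (fst z) (snd z) t \<partial>lborel) =
        (\<integral> s. indicator {0<..t} s *
            (\<integral> z. indicator (Tset i0) z * q (fst z) (snd z) s * LPhi i0 B (\<Phi> n) z \<partial>lborel) \<partial>lborel)
        + 1/2 * (\<integral> s. indicator {0<..t} s *
            (\<integral> y. pd (\<Phi> n) (1, 0) (y $ i0, y) * trace i0 q y s \<partial>lborel) \<partial>lborel)" for n
      using WS C2c\<Phi>[of n] t by blast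
    have e1: "(\<integral> z. indicator (Tset i0) z * \<Phi> n z * q (fst z) (snd z) t \<partial>lborel)
       = (\<integral> z. Qt t z * (H (fst z) * \<beta> n (fst z)) * F (snd z) \<partial>lborel)" for n
      by (simp add: \<Phi>_def G_def Qt_def mult_ac)
    have e2: "(\<integral> z. indicator (Tset i0) z * q (fst z) (snd z) s * LPhi i0 B (\<Phi> n) z \<partial>lborel)
       = (\<integral> z. (indicator (Tset i0) z * q (fst z) (snd z) s) * (H (fst z) * \<beta> n (fst z)) * genL B F (snd z) \<partial>lborel)" for n s
      by (simp add: LPhi_eq G_def mult_ac)
    have e3: "(\<lambda>y. pd (\<Phi> n) (1, 0) (y $ i0, y) * trace i0 q y s) = (\<lambda>y. deriv H (y $ i0) * F y * trace i0 q y s)"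
      if "R \<le> real n" for n s
    proof
      fix y :: "real^'n"
      show "pd (\<Phi> n) (1, 0) (y $ i0, y) * trace i0 q y s = deriv H (y $ i0) * F y * trace i0 q y s"
      proof (cases "F y = 0")
        case True then show ?thesis by (simp add: pd1)
      next
        case False
        then have "\<bar>y $ i0\<bar> \<le> real n" using R[OF Sin[OF False]] that by linarith
        then show ?thesis by (simp add: pd1 G1_def bone)
      qed
    qed
    note Ft = Fa[OF t]
    have I: "integrable lborel (\<lambda>z. Qt t z * H (fst z) * F (snd z))"
      by (rule abs_integrable(1)[OF Ft Hm Hb Fm Fb Fb0 Sm Sfin])
    have lim1: "(\<lambda>n. \<integral> z. Qt t z * (H (fst z) * \<beta> n (fst z)) * F (snd z) \<partial>lborel) \<longlonglongrightarrow> (\<integral> x. F x * qH i0 H q x t \<partial>lborel)"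
      using abs_dct[OF Ft(1) I Hm Fm bm b1 bl] unfolding abs_fubini[OF I] qH_eq .
    have lim2: "(\<lambda>n. \<integral> s. indicator {0<..t} s * (\<integral> z. (indicator (Tset i0) z * q (fst z) (snd z) s) * (H (fst z) * \<beta> n (fst z)) * genL B F (snd z) \<partial>lborel) \<partial>lborel)
       \<longlonglongrightarrow> (\<integral> s. indicator {0<..t} s * (\<integral> x. genL B F x * qH i0 H q x s \<partial>lborel) \<partial>lborel)"
      using time_dct[OF X t Hm Hb Lm Lb Lb0 Sm Sfin bm b1 bl] unfolding qH_eq Qt_def by simp
    define C where "C = (\<integral> s. indicator {0<..t} s * (\<integral> y. deriv H (y $ i0) * F y * trace i0 q y s \<partial>lborel) \<partial>lborel)"
    obtain N :: nat where N: "R \<le> real N" using real_arch_simple by blast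
    have ev: "\<forall>\<^sub>F n in sequentially.
        (\<integral> s. indicator {0<..t} s * (\<integral> z. (indicator (Tset i0) z * q (fst z) (snd z) s) * (H (fst z) * \<beta> n (fst z)) * genL B F (snd z) \<partial>lborel) \<partial>lborel) + 1/2 * C
        = (\<integral> z. Qt t z * (H (fst z) * \<beta> n (fst z)) * F (snd z) \<partial>lborel)"
      unfolding eventually_sequentially
    proof (intro exI allI impI)
      fix n assume "N \<le> n"
      then have Rn: "R \<le> real n" using N by (meson of_nat_le_iff order_trans)
      show "(\<integral> s. indicator {0<..t} s * (\<integral> z. (indicator (Tset i0) z * q (fst z) (snd z) s) * (H (fst z) * \<beta> n (fst z)) * genL B F (snd z) \<partial>lborel) \<partial>lborel) + 1/2 * C
        = (\<integral> z. Qt t z * (H (fst z) * \<beta> n (fst z)) * F (snd z) \<partial>lborel)"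
        using E[of n] unfolding e1 e2 e3[OF Rn] C_def by simp
    qed
    have "(\<lambda>n. (\<integral> s. indicator {0<..t} s * (\<integral> z. (indicator (Tset i0) z * q (fst z) (snd z) s) * (H (fst z) * \<beta> n (fst z)) * genL B F (snd z) \<partial>lborel) \<partial>lborel) + 1/2 * C)
       \<longlonglongrightarrow> (\<integral> s. indicator {0<..t} s * (\<integral> x. genL B F x * qH i0 H q x s \<partial>lborel) \<partial>lborel) + 1/2 * C"
      by (intro tendsto_add lim2 tendsto_const)
    then have "(\<lambda>n. \<integral> z. Qt t z * (H (fst z) * \<beta> n (fst z)) * F (snd z) \<partial>lborel)
       \<longlonglongrightarrow> (\<integral> s. indicator {0<..t} s * (\<integral> x. genL B F x * qH i0 H q x s \<partial>lborel) \<partial>lborel) + 1/2 * C"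
      by (rule Lim_transform_eventually[OF _ ev])
    from LIMSEQ_unique[OF lim1 this]
    show "(\<integral> x. F x * qH i0 H q x t \<partial>lborel) =
            (\<integral> s. indicator {0<..t} s * (\<integral> x. genL B F x * qH i0 H q x s \<partial>lborel) \<partial>lborel)
            + 1/2 * (\<integral> s. indicator {0<..t} s *
                (\<integral> y. deriv H (y $ i0) * F y * trace i0 q y s \<partial>lborel) \<partial>lborel)"
      unfolding C_def .
  qed
  show ?thesis using P1 P2 by blast
qed

end
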